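(* Let $p$ be a prime with $p\equiv 1$ or $6\pmod 7$ and $p\ne 13$. Define $\phi_2,\phi_3\in\overline{\mathbb{F}}_p[t]$ by: if $p\equiv6\pmod7$, $\phi_2=f\big(\tfrac{2p-5}{7},\tfrac{2p-5}{7},\tfrac{p-6}{7}\big)$ and $\phi_3=f\big(\tfrac{3p-4}{7},\tfrac{3p-4}{7},\tfrac{5p-2}{7}\big)$; if $p\equiv1\pmod7$, $\phi_2=f\big(\tfrac{2p-2}{7},\tfrac{2p-2}{7},\tfrac{p-1}{7}\big)$ and $\phi_3=f\big(\tfrac{3p-3}{7},\tfrac{3p-3}{7},\tfrac{5p-5}{7}\big)$. Then there exists $\alpha\in\overline{\mathbb{F}}_p\setminus\{0,1\}$ with $\phi_2(\alpha)=0$ and $\phi_3(\alpha)\ne0$, and there exists $\alpha'\in\overline{\mathbb{F}}_p\setminus\{0,1\}$ with $\phi_2(\alpha')\ne0$ and $\phi_3(\alpha')=0$.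
   Context: For non-negative integers $a,b,c$, $f(a,b,c)\in\overline{\mathbb{F}}_p[t]$ is $f(a,b,c)=\sum_{i_2+i_3=c}\binom{a}{i_2}\binom{b}{i_3}t^{i_2}$ (binomial coefficients reduced mod $p$, $\binom{n}{i}=0$ for $i<0$ or $i>n$). (These $\phi_2,\phi_3$ are the Hasse–Witt entries of the family of curves $y^7=x^3(x-t)(x-1)^2\cdots$ with monodromy $(7,4,(3,1,1,2))$ at the characters $\zeta_7^2,\zeta_7^3$, but the claim concerns only the explicit polynomials.) *)

theory Defs
  imports "HOL-Computational_Algebra.Polynomial"
begin

definition f_poly :: "nat \<Rightarrow> nat \<Rightarrow> nat \<Rightarrow> 'k::field poly" where
  "f_poly a b c = (\<Sum>i2 = 0..c. monom (of_nat (a choose i2) * of_nat (b choose (c - i2))) i2)"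

definition phi2 :: "nat \<Rightarrow> 'k::field poly" where
  "phi2 p = (if p mod 7 = 6
     then f_poly ((2*p - 5) div 7) ((2*p - 5) div 7) ((p - 6) div 7)
     else f_poly ((2*p - 2) div 7) ((2*p - 2) div 7) ((p - 1) div 7))"

definition phi3 :: "nat \<Rightarrow> 'k::field poly" where
  "phi3 p = (if p mod 7 = 6
     then f_poly ((3*p - 4) div 7) ((3*p - 4) div 7) ((5*p - 2) div 7)
     else f_poly ((3*p - 3) div 7) ((3*p - 3) div 7) ((5*p - 5) div 7))"

end

theory Submission
  imports Defs "HOL-Computational_Algebra.Primes"
begin

lemma nz_nat:
  assumes "prime p" "CHAR('k::field) = p" "0 < n" "n < p"
  shows "of_nat n \<noteq> (0::'k)"
  using assms by (auto simp: of_nat_eq_0_iff_char_dvd dest: dvd_imp_le)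

lemma nz_choose:
  assumes "prime p" "CHAR('k::field) = p" "j \<le> n" "n < p"
  shows "of_nat (n choose j) \<noteq> (0::'k)"
proof
  assume "of_nat (n choose j) = (0::'k)"
  hence "p dvd (n choose j)" using assms by (simp add: of_nat_eq_0_iff_char_dvd)
  hence "p dvd fact n" using binomial_fact_lemma[OF assms(3)]
    by (metis dvd_mult)
  hence "p \<le> n" using prime_dvd_fact_iff[OF assms(1)] by blast
  thus False using assms by simp
qed

lemma coeff_f:
  "coeff (f_poly a b c :: 'k::field poly) n =
     (if n \<le> c then of_nat (a choose n) * of_nat (b choose (c - n)) else 0)"
  unfolding f_poly_def by (simp add: coeff_sum coeff_monom)


lemma choose_A: "Suc n * (a choose Suc n) = (a - n) * (a choose n)"
  using binomial_absorption[of n a] binomial_absorb_comp[of a n] by simp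

lemma key_nat:
  assumes "k \<le> a" "n < k"
  shows "Suc n * (a + 1 + n - k) * ((a choose Suc n) * (a choose (k - Suc n)))
       = (a - n) * (k - n) * ((a choose n) * (a choose (k - n)))"
proof -
  have 1: "Suc n * (a choose Suc n) = (a - n) * (a choose n)" by (rule choose_A)
  have 2: "Suc (k - Suc n) * (a choose Suc (k - Suc n)) = (a - (k - Suc n)) * (a choose (k - Suc n))"
    by (rule choose_A)
  have e1: "Suc (k - Suc n) = k - n" using assms by simp
  have e2: "a - (k - Suc n) = a + 1 + n - k" using assms by simp
  from 2 have 3: "(k - n) * (a choose (k - n)) = (a + 1 + n - k) * (a choose (k - Suc n))"
    by (simp only: e1 e2)
  have "Suc n * (a + 1 + n - k) * ((a choose Suc n) * (a choose (k - Suc n)))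
      = (Suc n * (a choose Suc n)) * ((a + 1 + n - k) * (a choose (k - Suc n)))" by (simp only: mult_ac)
  also have "\<dots> = ((a - n) * (a choose n)) * ((k - n) * (a choose (k - n)))" by (simp only: 1 3)
  finally show ?thesis by (simp only: mult_ac)
qed

lemma key_field:
  assumes "k \<le> a"
  defines "c \<equiv> \<lambda>n. coeff (f_poly a a k :: 'k::field poly) n"
  shows "of_nat (Suc n) * of_nat (a + 1 + n - k) * c (Suc n)
       = (of_nat n - of_nat a) * (of_nat n - of_nat k) * c n"
proof (cases "n < k")
  case True
  have "(of_nat (Suc n) * of_nat (a + 1 + n - k) * (of_nat (a choose Suc n) * of_nat (a choose (k - Suc n))) :: 'k)
       = of_nat (a - n) * of_nat (k - n) * (of_nat (a choose n) * of_nat (a choose (k - n)))"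
    using arg_cong[OF key_nat[OF assms(1) True], of "of_nat :: nat \<Rightarrow> 'k"] by (simp only: of_nat_mult)
  moreover have "of_nat (a - n) = (of_nat a - of_nat n :: 'k)" "of_nat (k - n) = (of_nat k - of_nat n :: 'k)"
    using True assms(1) by (simp_all add: of_nat_diff)
  moreover have "c (Suc n) = of_nat (a choose Suc n) * of_nat (a choose (k - Suc n))"
     "c n = of_nat (a choose n) * of_nat (a choose (k - n))" using True unfolding c_def coeff_f by auto
  ultimately show ?thesis
    by (metis (no_types, lifting) minus_diff_eq mult_minus_left mult_minus_right minus_mult_minus)
next
  case False
  then show ?thesis unfolding c_def coeff_f by auto
qed

lemma coeff_xq: "coeff ([:0,1,-1:] * q) n = (if n = 0 then 0 else coeff q (n - 1)) - (if n \<le> 1 then 0 else coeff q (n - 2))"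
  for q :: "'k::field poly"
  by (cases n; cases "n - 1") (auto simp: coeff_pCons)

lemma coeff_lin: "coeff ([:A,B:] * q) n = A * coeff q n + (if n = 0 then 0 else B * coeff q (n - 1))"
  for q :: "'k::field poly"
  by (cases n) (auto simp: coeff_pCons)


lemma ode_coeff:
  fixes F :: "'k::field poly" and A :: 'k
  shows "coeff ([:0,1,-1:] * pderiv (pderiv F) + [:A, of_nat (a+k) - 1:] * pderiv F - smult (of_nat (a*k)) F) n
     = of_nat (Suc n) * (A + of_nat n) * coeff F (Suc n) - (of_nat n - of_nat a) * (of_nat n - of_nat k) * coeff F n"
proof (cases n)
  case 0
  then show ?thesis by (simp add: coeff_xq coeff_lin coeff_pderiv algebra_simps)
next
  case (Suc m)
  then show ?thesis by (cases m) (simp_all add: coeff_xq coeff_lin coeff_pderiv algebra_simps)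
qed

lemma ode:
  assumes "k \<le> a"
  shows "[:0,1,-1:] * pderiv (pderiv (f_poly a a k)) + [:of_nat (a+1-k), of_nat (a+k) - 1:] * pderiv (f_poly a a k)
     - smult (of_nat (a*k)) (f_poly a a k) = (0 :: 'k::field poly)"
proof (rule poly_eqI)
  fix n
  have e: "a + 1 + n - k = (a + 1 - k) + n" using assms by simp
  show "coeff ([:0,1,-1:] * pderiv (pderiv (f_poly a a k)) + [:of_nat (a+1-k), of_nat (a+k) - 1:] * pderiv (f_poly a a k)
     - smult (of_nat (a*k)) (f_poly a a k)) n = coeff (0 :: 'k poly) n"
    unfolding ode_coeff using key_field[OF assms, of n, where 'k='k]
    by (simp only: e of_nat_add coeff_0 diff_self)
qed


lemma sep:
  fixes F P Q R :: "'k::field poly"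
  assumes ode: "P * pderiv (pderiv F) + Q * pderiv F + R * F = 0" and F0: "F \<noteq> 0"
    and P: "poly P \<alpha> \<noteq> 0"
    and ch: "of_nat (order \<alpha> F * (order \<alpha> F - 1)) \<noteq> (0::'k)"
  shows "order \<alpha> F \<le> 1"
proof (rule ccontr)
  assume "\<not> order \<alpha> F \<le> 1"
  then obtain j where m: "order \<alpha> F = Suc (Suc j)"
    by (intro that[of "order \<alpha> F - 2"]) simp
  define x where "x = [:-\<alpha>, 1:]"
  obtain G where FG: "F = x ^ Suc (Suc j) * G" and nd: "\<not> x dvd G"
    using order_decomp[OF F0, of \<alpha>] m x_def by auto
  have px: "pderiv x = 1" by (simp add: x_def pderiv_pCons)
  define K where "K = smult (of_nat (Suc (Suc j))) G + x * pderiv G"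
  have F1: "pderiv F = x ^ Suc j * K"
    unfolding FG K_def pderiv_mult pderiv_power_Suc px
    by (simp add: algebra_simps)
  have F2: "pderiv (pderiv F) = x ^ j * (smult (of_nat (Suc j)) K + x * pderiv K)"
    unfolding F1 pderiv_mult pderiv_power_Suc px
    by (simp add: algebra_simps)
  have "P * (x ^ j * (smult (of_nat (Suc j)) K + x * pderiv K)) + Q * (x ^ Suc j * K) + R * F = 0"
    unfolding F2[symmetric] F1[symmetric] by (rule ode)
  hence "P * (x ^ j * (smult (of_nat (Suc j)) K + x * pderiv K)) + Q * (x ^ Suc j * K) + R * (x ^ Suc (Suc j) * G) = 0"
    by (metis FG)
  hence "x ^ j * (P * (smult (of_nat (Suc j)) K + x * pderiv K) + Q * x * K + R * x * x * G) = 0"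
    by (simp add: algebra_simps)
  hence E: "P * (smult (of_nat (Suc j)) K + x * pderiv K) + Q * x * K + R * x * x * G = 0"
    by (simp add: x_def)
  have "poly (P * (smult (of_nat (Suc j)) K + x * pderiv K) + Q * x * K + R * x * x * G) \<alpha> = 0"
    by (simp only: E poly_0)
  hence "poly P \<alpha> * (of_nat (Suc j) * (of_nat (Suc (Suc j)) * poly G \<alpha>)) = 0"
    by (simp add: x_def K_def)
  moreover have "poly G \<alpha> \<noteq> 0" using nd by (simp add: x_def poly_eq_0_iff_dvd)
  moreover have "of_nat (Suc j) * of_nat (Suc (Suc j)) \<noteq> (0::'k)"
  proof -
    have "of_nat (Suc (Suc j) * Suc j) \<noteq> (0::'k)"
      using ch by (simp only: m diff_Suc_1 not_False_eq_True)
    thus ?thesis by (metis of_nat_mult mult.commute)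
  qed
  ultimately show False using P by simp
qed


lemma sqfree_dvd:
  fixes F G :: "'k::alg_closed_field poly"
  assumes "F \<noteq> 0" "\<forall>a. order a F \<le> 1" "\<forall>a. poly F a = 0 \<longrightarrow> poly G a = 0"
  shows "F dvd G"
  using assms
proof (induction "degree F" arbitrary: F G rule: less_induct)
  case (less F)
  show ?case
  proof (cases "degree F = 0")
    case True
    then obtain c where c: "F = [:c:]" by (metis degree_eq_zeroE)
    with less.prems have "c \<noteq> 0" by auto
    hence "G = F * smult (inverse c) G" using c by (simp add: field_simps)
    thus ?thesis by (metis dvd_triv_left)
  next
    case False
    then obtain r where r: "poly F r = 0" using alg_closed_imp_poly_has_root by blast
    define x where "x = [:-r, 1:]"
    obtain F1 where F1: "F = x * F1" using r unfolding x_def by (metis dvdE poly_eq_0_iff_dvd)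
    have "poly G r = 0" using less.prems r by blast
    then obtain G1 where G1: "G = x * G1" unfolding x_def by (metis dvdE poly_eq_0_iff_dvd)
    have x0: "x \<noteq> 0" by (simp add: x_def)
    have F10: "F1 \<noteq> 0" using less.prems(1) F1 by auto
    have ordF: "order a F = order a x + order a F1" for a
      using F1 less.prems(1) order_mult by metis
    have "order r x = 1" unfolding x_def by (simp add: order_power_n_n[of r 1, simplified])
    hence "order r F1 = 0" using ordF[of r] spec[OF less.prems(2), of r] by linarith
    hence F1r: "poly F1 r \<noteq> 0" using F10 order_root by blast
    have "degree x = 1" by (simp add: x_def)
    hence degF: "degree F = Suc (degree F1)" using F1 F10 x0 degree_mult_eq[OF x0 F10] by simp
    have "F1 dvd G1"
    proof (rule less.hyps)
      show "degree F1 < degree F" using degF by simp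
      show "F1 \<noteq> 0" by fact
      show "\<forall>a. order a F1 \<le> 1" using ordF less.prems(2) by (metis add_leD2)
      show "\<forall>a. poly F1 a = 0 \<longrightarrow> poly G1 a = 0"
      proof (intro allI impI)
        fix a assume a: "poly F1 a = 0"
        hence "a \<noteq> r" using F1r by auto
        moreover have "poly G a = 0" using less.prems(3) a F1 by simp
        ultimately show "poly G1 a = 0" using G1 by (simp add: x_def)
      qed
    qed
    thus ?thesis using F1 G1 by simp
  qed
qed

lemma exists_root:
  fixes F G :: "'k::alg_closed_field poly"
  assumes "F \<noteq> 0" "G \<noteq> 0" "\<forall>a. order a F \<le> 1" "degree F = degree G"
    and "coeff G 0 * coeff F 1 \<noteq> coeff G 1 * coeff F 0"
  shows "\<exists>a. poly F a = 0 \<and> poly G a \<noteq> 0"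
proof (rule ccontr)
  assume "\<not> ?thesis"
  hence "F dvd G" using sqfree_dvd[OF assms(1,3)] by blast
  then obtain H where H: "G = F * H" by (elim dvdE)
  have "H \<noteq> 0" using H assms(2) by auto
  hence "degree H = 0" using H assms(1,4) by (simp add: degree_mult_eq)
  then obtain c where "H = [:c:]" by (metis degree_eq_zeroE)
  hence "G = smult c F" using H by simp
  thus False using assms(5) by simp
qed


lemma shift:
  assumes "k \<le> b"
  shows "f_poly b b (2*b - k) = (monom 1 (b - k) * f_poly b b k :: 'k::field poly)"
proof (rule poly_eqI)
  fix n
  show "coeff (f_poly b b (2*b - k)) n = coeff (monom 1 (b - k) * f_poly b b k :: 'k poly) n"
  proof (cases "n < b - k")
    case True
    then show ?thesis by (simp add: coeff_f coeff_monom_mult binomial_eq_0)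
  next
    case False
    show ?thesis
    proof (cases "n \<le> b")
      case True
      have e1: "k - (n - (b - k)) = b - n" using True False assms by arith
      have e2: "2*b - k - n = b - (n - (b - k))" using True False assms by arith
      have j: "n - (b - k) \<le> b" using True by arith
      have 1: "b choose n = b choose (k - (n - (b - k)))"
        unfolding e1 using binomial_symmetric[OF True] .
      have 2: "b choose (2*b - k - n) = b choose (n - (b - k))"
        unfolding e2 using binomial_symmetric[OF j] by simp
      have L: "coeff (f_poly b b (2*b-k) :: 'k poly) n = of_nat (b choose n) * of_nat (b choose (2*b-k-n))"
        using True assms by (simp add: coeff_f)
      have jk: "n - (b - k) \<le> k" using True by arith
      have R: "coeff (monom 1 (b-k) * f_poly b b k :: 'k poly) n
          = of_nat (b choose (n-(b-k))) * of_nat (b choose (k-(n-(b-k))))"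
        using False jk by (simp add: coeff_monom_mult coeff_f)
      show ?thesis unfolding L R 1 2 by (rule mult.commute)
    next
      case False
      then show ?thesis using assms by (simp add: coeff_f coeff_monom_mult binomial_eq_0)
    qed
  qed
qed


lemma nz_prod:
  assumes "prime p" "CHAR('k::field) = p" "0 < m" "m < p" "0 < n" "n < p"
  shows "of_nat (m * n) \<noteq> (0::'k)"
  using nz_nat[OF assms(1,2,3,4)] nz_nat[OF assms(1,2,5,6)] by simp

lemma F_props:
  assumes p: "prime p" and ch: "CHAR('k::field) = p" and ka: "k \<le> a" and ap: "2*a < p" and k1: "1 \<le> k"
  defines "F \<equiv> (f_poly a a k :: 'k poly)"
  shows "F \<noteq> 0" "degree F = k" "poly F 0 \<noteq> 0" "poly F 1 \<noteq> 0" "\<forall>\<alpha>. order \<alpha> F \<le> 1"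
    "coeff F 0 = of_nat (a choose k)" "coeff F 1 = of_nat a * of_nat (a choose (k - 1))"
proof -
  have ck: "coeff F k \<noteq> 0" unfolding F_def coeff_f using nz_choose[OF p ch ka] ap by simp
  thus F0: "F \<noteq> 0" by auto
  have "degree F \<le> k" unfolding F_def by (rule degree_le) (simp add: coeff_f)
  moreover have "k \<le> degree F" using ck by (rule le_degree)
  ultimately show dg: "degree F = k" by simp
  show c0: "coeff F 0 = of_nat (a choose k)" unfolding F_def coeff_f by simp
  show "coeff F 1 = of_nat a * of_nat (a choose (k - 1))" unfolding F_def coeff_f
    using k1 by (cases k) simp_all
  show P0: "poly F 0 \<noteq> 0" using c0 nz_choose[OF p ch ka] ap by (simp add: poly_0_coeff_0)
  have "poly F 1 = of_nat (\<Sum>i\<le>k. (a choose i) * (a choose (k - i)))"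
    unfolding F_def f_poly_def by (simp add: poly_sum poly_monom atLeast0AtMost)
  also have "\<dots> = of_nat ((a + a) choose k)" by (simp only: vandermonde)
  finally show P1: "poly F 1 \<noteq> 0" using nz_choose[OF p ch, of k "a + a"] ka ap by simp
  show "\<forall>\<alpha>. order \<alpha> F \<le> 1"
  proof
    fix \<alpha> :: 'k
    show "order \<alpha> F \<le> 1"
    proof (cases "poly F \<alpha> = 0")
      case False
      then show ?thesis by (simp add: order_0I)
    next
      case True
      hence a0: "\<alpha> \<noteq> 0" "\<alpha> \<noteq> 1" using P0 P1 by auto
      have Pa: "poly [:0, 1, -1:] \<alpha> \<noteq> 0"
      proof
        assume "poly [:0, 1, -1:] \<alpha> = 0"
        hence "\<alpha> * (1 - \<alpha>) = 0" by (simp add: algebra_simps)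
        thus False using a0 by simp
      qed
      have O: "[:0,1,-1:] * pderiv (pderiv F) + [:of_nat (a+1-k), of_nat (a+k) - 1:] * pderiv F
          + [:- of_nat (a*k):] * F = 0"
        using ode[OF ka, where 'k='k] unfolding F_def by simp
      show ?thesis
      proof (rule ccontr)
        assume nle: "\<not> order \<alpha> F \<le> 1"
        have "order \<alpha> F \<le> degree F" using F0 by (rule order_degree)
        hence mlt: "order \<alpha> F < p" using dg ka ap by simp
        have "of_nat (order \<alpha> F * (order \<alpha> F - 1)) \<noteq> (0::'k)"
          using nz_prod[OF p ch, of "order \<alpha> F" "order \<alpha> F - 1"] nle mlt by simp
        from sep[OF O F0 Pa this] nle show False by simp
      qed
    qed
  qed
qed


lemma cross:
  assumes p: "prime p" and ch: "CHAR('k::field) = p" and k2: "2 \<le> k" and ka: "k \<le> a" and ab: "a < b" and bp: "2*b < p"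
  shows "(of_nat (b choose k) :: 'k) * (of_nat a * of_nat (a choose (k-1))) \<noteq> (of_nat b * of_nat (b choose (k-1))) * of_nat (a choose k)"
proof
  assume E: "(of_nat (b choose k) :: 'k) * (of_nat a * of_nat (a choose (k-1))) = (of_nat b * of_nat (b choose (k-1))) * of_nat (a choose k)"
  have rel: "of_nat k * (of_nat (n choose k) :: 'k) = (of_nat n + 1 - of_nat k) * of_nat (n choose (k - 1))" if "k \<le> n" for n
  proof -
    have "Suc (k - 1) * (n choose Suc (k - 1)) = (n - (k - 1)) * (n choose (k - 1))" by (rule choose_A)
    moreover have "Suc (k - 1) = k" using k2 by simp
    moreover have "n - (k - 1) = (n + 1) - k" using k2 that by simp
    ultimately have "k * (n choose k) = ((n + 1) - k) * (n choose (k - 1))" by simp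
    hence "(of_nat (k * (n choose k)) :: 'k) = of_nat (((n + 1) - k) * (n choose (k - 1)))" by simp
    thus ?thesis using that by (simp add: of_nat_diff)
  qed
  define ca where "ca = (of_nat (a choose k) :: 'k)"
  define ca' where "ca' = (of_nat (a choose (k-1)) :: 'k)"
  define cb where "cb = (of_nat (b choose k) :: 'k)"
  define cb' where "cb' = (of_nat (b choose (k-1)) :: 'k)"
  have Ra: "of_nat k * ca = (of_nat a + 1 - of_nat k) * ca'" unfolding ca_def ca'_def by (rule rel[OF ka])
  have Rb: "of_nat k * cb = (of_nat b + 1 - of_nat k) * cb'" unfolding cb_def cb'_def using ka ab by (intro rel) simp
  have "ca' * cb' * (of_nat a - of_nat b) * (1 - of_nat k) = of_nat a * ca' * ((of_nat b + 1 - of_nat k) * cb') - of_nat b * cb' * ((of_nat a + 1 - of_nat k) * ca')"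
    by (simp add: algebra_simps)
  also have "\<dots> = of_nat a * ca' * (of_nat k * cb) - of_nat b * cb' * (of_nat k * ca)" by (simp only: Ra Rb)
  also have "\<dots> = of_nat k * (cb * (of_nat a * ca') - (of_nat b * cb') * ca)" by (simp add: algebra_simps)
  also have "\<dots> = 0" using E unfolding ca_def ca'_def cb_def cb'_def by simp
  finally have Z: "ca' * cb' * (of_nat a - of_nat b) * (1 - of_nat k) = 0" .
  have "ca' \<noteq> 0" unfolding ca'_def using ka ab bp by (intro nz_choose[OF p ch]) auto
  moreover have "cb' \<noteq> 0" unfolding cb'_def using ka ab bp by (intro nz_choose[OF p ch]) auto
  moreover have "(of_nat a - of_nat b :: 'k) \<noteq> 0"
  proof -
    have "(of_nat (b - a) :: 'k) \<noteq> 0" using ab bp by (intro nz_nat[OF p ch]) auto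
    thus ?thesis using ab by (simp add: of_nat_diff)
  qed
  moreover have "(1 - of_nat k :: 'k) \<noteq> 0"
  proof -
    have "(of_nat (k - 1) :: 'k) \<noteq> 0" using k2 ka ab bp by (intro nz_nat[OF p ch]) auto
    thus ?thesis using k2 by (simp add: of_nat_diff)
  qed
  ultimately show False using Z by simp
qed



lemma main_gen:
  assumes p: "prime p" and ch: "CHAR('k::alg_closed_field) = p" and k2: "2 \<le> k" and ka: "k \<le> a"
    and ab: "a < b" and bp: "2*b < p"
  shows "(\<exists>\<alpha>::'k. \<alpha> \<noteq> 0 \<and> \<alpha> \<noteq> 1 \<and> poly (f_poly a a k) \<alpha> = 0 \<and> poly (f_poly b b k) \<alpha> \<noteq> 0)
       \<and> (\<exists>\<alpha>::'k. \<alpha> \<noteq> 0 \<and> \<alpha> \<noteq> 1 \<and> poly (f_poly a a k) \<alpha> \<noteq> 0 \<and> poly (f_poly b b k) \<alpha> = 0)"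
proof -
  have k1: "1 \<le> k" using k2 by simp
  have ap: "2*a < p" using ab bp by simp
  have kb: "k \<le> b" using ka ab by simp
  note FA = F_props[OF p ch ka ap k1]
  note FB = F_props[OF p ch kb bp k1]
  have C: "(of_nat (b choose k) :: 'k) * (of_nat a * of_nat (a choose (k-1))) \<noteq> (of_nat b * of_nat (b choose (k-1))) * of_nat (a choose k)"
    by (rule cross[OF p ch k2 ka ab bp])
  have "\<exists>x. poly (f_poly a a k :: 'k poly) x = 0 \<and> poly (f_poly b b k) x \<noteq> 0"
    by (rule exists_root) (use FA FB C in simp_all)
  then obtain x where x: "poly (f_poly a a k :: 'k poly) x = 0" "poly (f_poly b b k) x \<noteq> 0" by blast
  have "\<exists>y. poly (f_poly b b k :: 'k poly) y = 0 \<and> poly (f_poly a a k) y \<noteq> 0"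
    by (rule exists_root) (use FA FB C in \<open>simp_all add: mult.commute\<close>)
  then obtain y where y: "poly (f_poly b b k :: 'k poly) y = 0" "poly (f_poly a a k) y \<noteq> 0" by blast
  have "x \<noteq> 0" "x \<noteq> 1" using x FA(3,4) by auto
  moreover have "y \<noteq> 0" "y \<noteq> 1" using y FB(3,4) by auto
  ultimately show ?thesis using x y by blast
qed

theorem lemma5p3:
  fixes p :: nat
  assumes "prime p"
    and "p mod 7 = 1 \<or> p mod 7 = 6"
    and "p \<noteq> 13"
    and "CHAR('k::alg_closed_field) = p"
  shows "(\<exists>\<alpha>::'k. \<alpha> \<noteq> 0 \<and> \<alpha> \<noteq> 1 \<and> poly (phi2 p) \<alpha> = 0 \<and> poly (phi3 p) \<alpha> \<noteq> 0)
       \<and> (\<exists>\<alpha>'::'k. \<alpha>' \<noteq> 0 \<and> \<alpha>' \<noteq> 1 \<and> poly (phi2 p) \<alpha>' \<noteq> 0 \<and> poly (phi3 p) \<alpha>' = 0)"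
proof -
  have n6: "\<not> prime (6::nat)" "\<not> prime (8::nat)" "\<not> prime (1::nat)"
    by (auto simp: prime_nat_iff intro!: exI[of _ 2])
  obtain k a b where k2: "2 \<le> k" and ka: "k \<le> a" and ab: "a < b" and bp: "2*b < p"
    and P2: "phi2 p = (f_poly a a k :: 'k poly)" and P3: "phi3 p = (f_poly b b (2*b - k) :: 'k poly)"
  proof (cases "p mod 7 = 6")
    case True
    define k where "k = p div 7"
    have pk: "p = 7*k + 6" using True div_mult_mod_eq[of p 7] unfolding k_def by linarith
    have "k \<noteq> 0"
    proof
      assume "k = 0" hence "p = 6" using pk by simp
      thus False using n6 assms(1) by simp
    qed
    moreover have "k \<noteq> 1" using assms(3) pk by auto
    ultimately have "2 \<le> k" by simp
    moreover have "phi2 p = (f_poly (2*k+1) (2*k+1) k :: 'k poly)"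
      unfolding phi2_def using True pk by simp
    moreover have "phi3 p = (f_poly (3*k+2) (3*k+2) (2*(3*k+2) - k) :: 'k poly)"
    proof -
      have e: "(3*p - 4) div 7 = 3*k+2" "(5*p - 2) div 7 = 2*(3*k+2) - k" using pk by simp_all
      show ?thesis unfolding phi3_def using True by (simp only: e) simp
    qed
    ultimately show ?thesis using pk by (intro that[of k "2*k+1" "3*k+2"]) simp_all
  next
    case False
    hence M: "p mod 7 = 1" using assms(2) by simp
    define k where "k = p div 7"
    have pk: "p = 7*k + 1" using M div_mult_mod_eq[of p 7] unfolding k_def by linarith
    have "k \<noteq> 0"
    proof
      assume "k = 0" hence "p = 1" using pk by simp
      thus False using n6 assms(1) by simp
    qed
    moreover have "k \<noteq> 1"
    proof
      assume "k = 1" hence "p = 8" using pk by simp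
      thus False using n6 assms(1) by simp
    qed
    ultimately have "2 \<le> k" by simp
    moreover have "phi2 p = (f_poly (2*k) (2*k) k :: 'k poly)"
      unfolding phi2_def using False pk by simp
    moreover have "phi3 p = (f_poly (3*k) (3*k) (2*(3*k) - k) :: 'k poly)"
    proof -
      have e: "(3*p - 3) div 7 = 3*k" "(5*p - 5) div 7 = 2*(3*k) - k" using pk by simp_all
      show ?thesis unfolding phi3_def using False by (simp only: e if_False)
    qed
    ultimately show ?thesis using pk by (intro that[of k "2*k" "3*k"]) simp_all
  qed
  have kb: "k \<le> b" using ka ab by simp
  have P3': "poly (phi3 p) x = x ^ (b - k) * poly (f_poly b b k) x" for x :: 'k
    unfolding P3 shift[OF kb] by (simp add: poly_monom)
  from main_gen[OF assms(1,4) k2 ka ab bp] show ?thesis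
    unfolding P2 P3' by auto
qed

end
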